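(* Let $\mathcal{Q}\subset\mathbb{R}^2$ be a convex polygon and $Q\in\mathcal{Q}$ one of its vertices. Let $\delta>0$ and $\bar Q\in\mathbb{R}^2$ with $\|Q-\bar Q\|<\delta$. Suppose there is $r>0$ with $\|Q\|>r$ such that \[ \frac{\langle Q,Q-P_j\rangle}{\|Q\|\,\|Q-P_j\|}\ge\frac{\delta}{r} \] for all other vertices $P_j\in\mathcal{Q}\setminus\{Q\}$. Then $Q$ is $\delta$-locally maximally distant with respect to $\bar Q$.
   Context: A convex polygon is a finite set of points of $\mathbb{R}^2$, not all on one line, in convex position (its points are its vertices). For a vertex $Q$ of a convex polygon $\mathcal{Q}$ and $\bar Q\in\mathbb{R}^2$ with $\|Q-\bar Q\|<\delta$, $Q$ is called $\delta$-locally maximally distant with respect to $\bar Q$ if $\|Q\|>\|A\|$ for every $A$ in the intersection of the open disk of radius $\delta$ centered at $\bar Q$ with the interior of the convex hull of $\mathcal{Q}$. *)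

theory Defs
  imports "HOL-Analysis.Analysis"
begin

definition convex_polygon :: "(real^2) set \<Rightarrow> bool" where
  "convex_polygon P \<longleftrightarrow> finite P \<and> \<not> collinear P \<and>
     (\<forall>p\<in>P. p \<notin> convex hull (P - {p}))"

definition loc_max_distant :: "real \<Rightarrow> (real^2) set \<Rightarrow> real^2 \<Rightarrow> real^2 \<Rightarrow> bool" where
  "loc_max_distant \<delta> P Q Qbar \<longleftrightarrow>
     (\<forall>A \<in> ball Qbar \<delta> \<inter> interior (convex hull P). norm Q > norm A)"

end

theory Submission
  imports Defs
begin

lemma cone_convex:
  fixes Q :: "'a::real_inner" and c :: real
  assumes "c \<ge> 0"
  shows "convex {x. Q \<bullet> (Q - x) \<ge> c * norm (Q - x)}"
  unfolding convex_def
proof (intro allI impI ballI, safe)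
  fix x y :: 'a and u v :: real
  assume x: "c * norm (Q - x) \<le> Q \<bullet> (Q - x)" and y: "c * norm (Q - y) \<le> Q \<bullet> (Q - y)"
    and u: "0 \<le> u" and v: "0 \<le> v" and uv: "u + v = 1"
  have e: "Q - (u *\<^sub>R x + v *\<^sub>R y) = u *\<^sub>R (Q - x) + v *\<^sub>R (Q - y)"
  proof -
    have "u *\<^sub>R (Q - x) + v *\<^sub>R (Q - y) = (u + v) *\<^sub>R Q - (u *\<^sub>R x + v *\<^sub>R y)"
      by (simp add: algebra_simps)
    thus ?thesis using uv by simp
  qed
  have "norm (Q - (u *\<^sub>R x + v *\<^sub>R y)) \<le> u * norm (Q - x) + v * norm (Q - y)"
    unfolding e using norm_triangle_ineq[of "u *\<^sub>R (Q - x)" "v *\<^sub>R (Q - y)"] u v by simp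
  hence "c * norm (Q - (u *\<^sub>R x + v *\<^sub>R y)) \<le> u * (c * norm (Q - x)) + v * (c * norm (Q - y))"
  proof -
    have "c * norm (Q - (u *\<^sub>R x + v *\<^sub>R y)) \<le> c * (u * norm (Q - x) + v * norm (Q - y))"
      using assms \<open>norm (Q - (u *\<^sub>R x + v *\<^sub>R y)) \<le> u * norm (Q - x) + v * norm (Q - y)\<close>
      by (rule mult_left_mono[rotated])
    thus ?thesis by (simp add: algebra_simps)
  qed
  also have "\<dots> \<le> u * (Q \<bullet> (Q - x)) + v * (Q \<bullet> (Q - y))"
    using x y u v by (simp add: add_mono mult_left_mono)
  also have "\<dots> = Q \<bullet> (Q - (u *\<^sub>R x + v *\<^sub>R y))"
    unfolding e by (simp add: inner_add_right)
  finally show "c * norm (Q - (u *\<^sub>R x + v *\<^sub>R y)) \<le> Q \<bullet> (Q - (u *\<^sub>R x + v *\<^sub>R y))" .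
qed

theorem lemma5p12:
  fixes P :: "(real^2) set" and Q Qbar :: "real^2" and \<delta> r :: real
  assumes "convex_polygon P" and "Q \<in> P"
    and "\<delta> > 0" and "norm (Q - Qbar) < \<delta>"
    and "r > 0" and "norm Q > r"
    and "\<forall>Pj \<in> P - {Q}. (Q \<bullet> (Q - Pj)) / (norm Q * norm (Q - Pj)) \<ge> \<delta> / r"
  shows "loc_max_distant \<delta> P Q Qbar"
proof -
  define c where "c = \<delta> / r * norm Q"
  have nQ: "norm Q > 0" using assms by linarith
  have c0: "c \<ge> 0" using assms nQ unfolding c_def by simp
  have cd: "c > \<delta>"
  proof -
    have "norm Q / r > 1" using assms by simp
    hence "\<delta> * (norm Q / r) > \<delta> * 1" using assms(3) by (meson mult_strict_left_mono)
    thus ?thesis unfolding c_def by simp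
  qed
  let ?S = "{x. Q \<bullet> (Q - x) \<ge> c * norm (Q - x)}"
  have PS: "P \<subseteq> ?S"
  proof
    fix x assume xP: "x \<in> P"
    show "x \<in> ?S"
    proof (cases "x = Q")
      case True thus ?thesis by simp
    next
      case False
      have pos: "norm Q * norm (Q - x) > 0" using nQ False by simp
      have "\<delta> / r \<le> (Q \<bullet> (Q - x)) / (norm Q * norm (Q - x))" using assms(7) xP False by blast
      hence "\<delta> / r * (norm Q * norm (Q - x)) \<le> Q \<bullet> (Q - x)"
        using pos by (simp add: pos_le_divide_eq)
      thus ?thesis unfolding c_def by (simp add: mult.assoc)
    qed
  qed
  have HS: "convex hull P \<subseteq> ?S"
    using hull_minimal[of P ?S convex] PS cone_convex[OF c0, of Q] by blast
  show ?thesis unfolding loc_max_distant_def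
  proof
    fix A assume A: "A \<in> ball Qbar \<delta> \<inter> interior (convex hull P)"
    then obtain e where e: "e > 0" "ball A e \<subseteq> convex hull P"
      using mem_interior by blast
    have AQ: "A \<noteq> Q"
    proof
      assume "A = Q"
      define x where "x = Q + (e / 2 / norm Q) *\<^sub>R Q"
      have "dist A x = e / 2" unfolding x_def \<open>A = Q\<close> using nQ e by (simp add: dist_norm)
      hence "x \<in> ball A e" using e by simp
      hence "x \<in> ?S" using e HS by blast
      moreover have "Q \<bullet> (Q - x) = - (e / 2 / norm Q) * (Q \<bullet> Q)" unfolding x_def
        by (simp add: inner_diff_right)
      moreover have "Q \<bullet> Q > 0" using nQ by simp
      ultimately have "c * norm (Q - x) \<le> - (e / 2 / norm Q) * (Q \<bullet> Q)" by simp
      moreover have "- (e / 2 / norm Q) * (Q \<bullet> Q) < 0" using e nQ \<open>Q \<bullet> Q > 0\<close>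
        by (simp add: mult_pos_pos)
      ultimately show False using c0 by (smt (verit) norm_ge_zero mult_nonneg_nonneg)
    qed
    have AS: "A \<in> ?S" using A HS interior_subset by blast
    define d where "d = norm (Q - A)"
    have d0: "d > 0" using AQ unfolding d_def by simp
    have d2: "d < 2 * \<delta>"
    proof -
      have "dist Qbar A < \<delta>" using A by simp
      hence "norm (Qbar - A) < \<delta>" by (simp add: dist_norm)
      moreover have "d \<le> norm (Q - Qbar) + norm (Qbar - A)" unfolding d_def
        by (metis diff_add_cancel add_diff_eq norm_triangle_ineq)
      ultimately show ?thesis using assms(4) by linarith
    qed
    have "(norm A)^2 = (norm Q)^2 - 2 * (Q \<bullet> (Q - A)) + d^2"
      unfolding d_def by (simp add: power2_norm_eq_inner inner_diff_left inner_diff_right inner_commute)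
    also have "\<dots> \<le> (norm Q)^2 - 2 * c * d + d^2" using AS unfolding d_def by simp
    also have "\<dots> < (norm Q)^2"
    proof -
      have "d * (d - 2 * c) < 0" using d0 d2 cd by (simp add: mult_pos_neg)
      thus ?thesis by (simp add: power2_eq_square algebra_simps)
    qed
    finally have "(norm A)^2 < (norm Q)^2" .
    thus "norm A < norm Q" using power_less_imp_less_base by fastforce
  qed
qed

end
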